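(* For every pair of positive integers $n,d$ there exist an integer $N=N(n,d)$ and a pointed hypersurface $(p,Y)$ of degree $d$ in $\mathbb{P}^N$ such that every member of $\mathcal{U}_{n,d}$ is a parameterized linear section of $(p,Y)$. Furthermore, for every $(q,X)\in\mathcal{U}_{n,d}$ there exists a parameterized $n$-dimensional linear space $\Lambda\in\mathcal{G}_p(n,N)$ with $\phi_n(\Lambda)=(q,X)$ such that the induced map on tangent spaces $d\phi_n: T_\Lambda\mathcal{G}_p(n,N)\to T_{(q,X)}\mathcal{U}_{n,d}$ is surjective.
   Context: $\mathcal{U}_{n,d}$ is the universal hypersurface of degree $d$ in $\mathbb{P}^n$: the variety of pairs $(q,X)$ ("pointed hypersurfaces") where $X\subset\mathbb{P}^n$ is a hypersurface of degree $d$ and $q\in X$. A parameterized linear space of dimension $r$ in $\mathbb{P}^N$ is a linear embedding $f:\mathbb{P}^r\to\mathbb{P}^N$; $\mathcal{G}_p(r,N)$ denotes the space of parameterized $r$-dimensional linear spaces in $\mathbb{P}^N$ whose image contains $p$. For a pointed hypersurface $(p,Y)$ in $\mathbb{P}^N$ and $f\in\mathcal{G}_p(r,N)$ whose image is not contained in $Y$, the parameterized linear section of $(p,Y)$ by $f$ is $(f^{-1}(p),f^{-1}(Y))\in\mathcal{U}_{r,d}$. This defines the rational map $\phi_r:\mathcal{G}_p(r,N)\dashrightarrow\mathcal{U}_{r,d}$. *)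

theory Defs
  imports "HOL-Analysis.Analysis"
begin

text \<open>A vector of k^(m+1) is a function nat => complex vanishing at indices > m
  (homogeneous coordinates x_0..x_m).  A homogeneous form of degree d in
  x_0..x_m is given by its coefficient function on exponent vectors
  (monomials) of total degree d supported in {0..m}.  Points of P^m and
  hypersurfaces of degree d in P^m are nonzero vectors resp. nonzero forms,
  considered up to nonzero scalars.\<close>

definition vecs :: "nat \<Rightarrow> (nat \<Rightarrow> complex) set" where
  "vecs m = {v. \<forall>i>m. v i = 0}"

definition monomials :: "nat \<Rightarrow> nat \<Rightarrow> (nat \<Rightarrow> nat) set" where
  "monomials m d = {\<alpha>. (\<forall>i>m. \<alpha> i = 0) \<and> (\<Sum>i\<le>m. \<alpha> i) = d}"

definition forms :: "nat \<Rightarrow> nat \<Rightarrow> ((nat \<Rightarrow> nat) \<Rightarrow> complex) set" where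
  "forms m d = {F. \<forall>\<alpha>. \<alpha> \<notin> monomials m d \<longrightarrow> F \<alpha> = 0}"

definition feval :: "nat \<Rightarrow> nat \<Rightarrow> ((nat \<Rightarrow> nat) \<Rightarrow> complex) \<Rightarrow> (nat \<Rightarrow> complex) \<Rightarrow> complex" where
  "feval m d F x = (\<Sum>\<alpha>\<in>monomials m d. F \<alpha> * (\<Prod>i\<le>m. x i ^ \<alpha> i))"

definition proportional :: "('a \<Rightarrow> complex) \<Rightarrow> ('a \<Rightarrow> complex) \<Rightarrow> bool" where
  "proportional u v \<longleftrightarrow> (\<exists>c. c \<noteq> 0 \<and> u = (\<lambda>i. c * v i))"

definition pointed_hyp :: "nat \<Rightarrow> nat \<Rightarrow> (nat \<Rightarrow> complex) \<Rightarrow> ((nat \<Rightarrow> nat) \<Rightarrow> complex) \<Rightarrow> bool" where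
  "pointed_hyp m d q F \<longleftrightarrow>
     q \<in> vecs m \<and> q \<noteq> (\<lambda>_. 0) \<and> F \<in> forms m d \<and> F \<noteq> (\<lambda>_. 0) \<and> feval m d F q = 0"

definition matvec :: "nat \<Rightarrow> nat \<Rightarrow> (nat \<Rightarrow> nat \<Rightarrow> complex) \<Rightarrow> (nat \<Rightarrow> complex) \<Rightarrow> (nat \<Rightarrow> complex)" where
  "matvec N r A x = (\<lambda>i. if i \<le> N then (\<Sum>j\<le>r. A i j * x j) else 0)"

text \<open>A parameterized linear space P^r -> P^N (a linear embedding, given by an
  injective matrix A up to scalar) whose image contains the point p:
  membership in G_p(r,N).\<close>
definition in_Gp :: "nat \<Rightarrow> nat \<Rightarrow> (nat \<Rightarrow> complex) \<Rightarrow> (nat \<Rightarrow> nat \<Rightarrow> complex) \<Rightarrow> bool" where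
  "in_Gp N r p A \<longleftrightarrow>
     inj_on (matvec N r A) (vecs r) \<and> (\<exists>t\<in>vecs r. proportional (matvec N r A t) p)"

text \<open>(q, V(G)) is the parameterized linear section of (p, V(F)) by A, i.e.
  phi_n(A) = (q, X): the image of A is not contained in Y = V(F),
  A^{-1}(p) = q and the pullback F o A is proportional to G.\<close>
definition param_section ::
  "nat \<Rightarrow> nat \<Rightarrow> nat \<Rightarrow> (nat \<Rightarrow> complex) \<Rightarrow> ((nat \<Rightarrow> nat) \<Rightarrow> complex) \<Rightarrow>
   (nat \<Rightarrow> nat \<Rightarrow> complex) \<Rightarrow> (nat \<Rightarrow> complex) \<Rightarrow> ((nat \<Rightarrow> nat) \<Rightarrow> complex) \<Rightarrow> bool" where
  "param_section N r d p F A q G \<longleftrightarrow>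
     in_Gp N r p A \<and>
     (\<exists>x\<in>vecs r. feval N d F (matvec N r A x) \<noteq> 0) \<and>
     (\<exists>t\<in>vecs r. proportional (matvec N r A t) p \<and> proportional t q) \<and>
     (\<exists>c. c \<noteq> 0 \<and> (\<forall>x\<in>vecs r. feval N d F (matvec N r A x) = c * feval r d G x))"

definition dderiv :: "((nat \<Rightarrow> complex) \<Rightarrow> complex) \<Rightarrow> (nat \<Rightarrow> complex) \<Rightarrow> (nat \<Rightarrow> complex) \<Rightarrow> complex" where
  "dderiv f y v = deriv (\<lambda>s. f (\<lambda>j. y j + s * v j)) 0"

text \<open>Tangent space of the affine cone over U_{r,d}
  (= {(t,H). H(t) = 0}) at the point (t,H).\<close>
definition cone_tangent_U :: "nat \<Rightarrow> nat \<Rightarrow> (nat \<Rightarrow> complex) \<Rightarrow> ((nat \<Rightarrow> nat) \<Rightarrow> complex) \<Rightarrow>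
    ((nat \<Rightarrow> complex) \<times> ((nat \<Rightarrow> nat) \<Rightarrow> complex)) set" where
  "cone_tangent_U r d t H = {(tv, Hv). tv \<in> vecs r \<and> Hv \<in> forms r d \<and>
       feval r d Hv t + dderiv (feval r d H) t tv = 0}"

text \<open>Tangent space of the lifted space {(A,t). A t = p} at (A,t).\<close>
definition cone_tangent_G :: "nat \<Rightarrow> nat \<Rightarrow> (nat \<Rightarrow> nat \<Rightarrow> complex) \<Rightarrow> (nat \<Rightarrow> complex) \<Rightarrow>
    ((nat \<Rightarrow> nat \<Rightarrow> complex) \<times> (nat \<Rightarrow> complex)) set" where
  "cone_tangent_G N r A t = {(Av, tv). tv \<in> vecs r \<and>
       (\<forall>i. matvec N r Av t i + matvec N r A tv i = 0)}"

text \<open>Surjectivity of d phi_r : T_Lambda G_p(r,N) -> T_(q,X) U_{r,d}, computed on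
  the lift (A,t) with A t = p and the cone point (t,H), H = F o A:
  the image of the differential of the lifted map (A,t) |-> (t, F o A),
  together with the scaling directions (t,0), (0,H) (the kernel of the
  projection of cones), spans the tangent space of the cone over U_{r,d}.\<close>
definition dphi_surj ::
  "nat \<Rightarrow> nat \<Rightarrow> nat \<Rightarrow> ((nat \<Rightarrow> nat) \<Rightarrow> complex) \<Rightarrow> (nat \<Rightarrow> nat \<Rightarrow> complex) \<Rightarrow>
   (nat \<Rightarrow> complex) \<Rightarrow> ((nat \<Rightarrow> nat) \<Rightarrow> complex) \<Rightarrow> bool" where
  "dphi_surj N r d F A t H \<longleftrightarrow>
     (\<forall>(tv, Hv) \<in> cone_tangent_U r d t H.
        \<exists>(Av, tv') \<in> cone_tangent_G N r A t. \<exists>a b.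
          tv = (\<lambda>i. tv' i + a * t i) \<and>
          (\<forall>x\<in>vecs r. feval r d Hv x =
              dderiv (feval N d F) (matvec N r A x) (matvec N r Av x) + b * feval r d H x))"

end

theory Submission
  imports Defs "HOL-Computational_Algebra.Polynomial"
begin


lemma finite_monomials: "finite (monomials m d)"
proof (rule inj_on_finite[where f="\<lambda>\<alpha>. restrict \<alpha> {..m}" and B="PiE {..m} (\<lambda>_. {..d})"])
  show "inj_on (\<lambda>\<alpha>. restrict \<alpha> {..m}) (monomials m d)"
  proof (rule inj_onI)
    fix a b assume a: "a \<in> monomials m d" and b: "b \<in> monomials m d" and e: "restrict a {..m} = restrict b {..m}"
    show "a = b"
    proof
      fix i show "a i = b i"
      proof (cases "i \<le> m")
        case True then show ?thesis using fun_cong[OF e, of i] by simp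
      next
        case False then show ?thesis using a b by (simp add: monomials_def)
      qed
    qed
  qed
  show "(\<lambda>\<alpha>. restrict \<alpha> {..m}) ` monomials m d \<subseteq> PiE {..m} (\<lambda>_. {..d})"
  proof
    fix f assume "f \<in> (\<lambda>\<alpha>. restrict \<alpha> {..m}) ` monomials m d"
    then obtain a where a: "a \<in> monomials m d" and f: "f = restrict a {..m}" by auto
    have "a i \<le> d" if "i \<le> m" for i
    proof -
      have "a i \<le> (\<Sum>j\<le>m. a j)" using that by (intro member_le_sum) auto
      then show ?thesis using a by (simp add: monomials_def)
    qed
    then show "f \<in> PiE {..m} (\<lambda>_. {..d})" using f by auto
  qed
  show "finite (PiE {..m} (\<lambda>_. {..d::nat}))" by (simp add: finite_PiE)
qed

definition isform :: "nat \<Rightarrow> nat \<Rightarrow> ((nat \<Rightarrow> complex) \<Rightarrow> complex) \<Rightarrow> bool" where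
  "isform m d f \<longleftrightarrow> (\<exists>H\<in>forms m d. \<forall>x. f x = feval m d H x)"

lemma feval_isform: "H \<in> forms m d \<Longrightarrow> isform m d (feval m d H)"
  unfolding isform_def by auto

lemma isform_zero: "isform m d (\<lambda>x. 0)"
  unfolding isform_def
  by (rule bexI[where x="\<lambda>_. 0"]) (auto simp: feval_def forms_def)

lemma isform_add:
  assumes "isform m d f" "isform m d g" shows "isform m d (\<lambda>x. f x + g x)"
proof -
  obtain F where F: "F \<in> forms m d" "\<And>x. f x = feval m d F x" using assms(1) unfolding isform_def by auto
  obtain G where G: "G \<in> forms m d" "\<And>x. g x = feval m d G x" using assms(2) unfolding isform_def by auto
  show ?thesis unfolding isform_def
    by (rule bexI[where x="\<lambda>a. F a + G a"])
       (use F G in \<open>auto simp: feval_def forms_def distrib_right sum.distrib\<close>)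
qed

lemma isform_scale:
  assumes "isform m d f" shows "isform m d (\<lambda>x. c * f x)"
proof -
  obtain F where F: "F \<in> forms m d" "\<And>x. f x = feval m d F x" using assms(1) unfolding isform_def by auto
  show ?thesis unfolding isform_def
    by (rule bexI[where x="\<lambda>a. c * F a"])
       (use F in \<open>auto simp: feval_def forms_def sum_distrib_left mult.assoc\<close>)
qed

lemma isform_sum:
  assumes "finite I" "\<And>i. i \<in> I \<Longrightarrow> isform m d (f i)"
  shows "isform m d (\<lambda>x. \<Sum>i\<in>I. f i x)"
  using assms
proof (induction I rule: finite_induct)
  case empty then show ?case by (simp add: isform_zero)
next
  case (insert a I) then show ?case by (simp add: isform_add)
qed

lemma isform_monom:
  assumes "\<alpha> \<in> monomials m d" shows "isform m d (\<lambda>x. \<Prod>i\<le>m. x i ^ \<alpha> i)"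
  unfolding isform_def
proof (rule bexI[where x="\<lambda>b. if b = \<alpha> then 1 else 0"])
  show "(\<lambda>b. if b = \<alpha> then 1 else 0) \<in> forms m d" using assms by (auto simp: forms_def)
  show "\<forall>x. (\<Prod>i\<le>m. x i ^ \<alpha> i) = feval m d (\<lambda>b. if b = \<alpha> then 1 else 0) x"
  proof
    fix x :: "nat \<Rightarrow> complex"
    have "feval m d (\<lambda>b. if b = \<alpha> then 1 else 0) x = (\<Sum>b\<in>monomials m d. if b = \<alpha> then (\<Prod>i\<le>m. x i ^ b i) else 0)"
      unfolding feval_def by (rule sum.cong) auto
    also have "\<dots> = (\<Prod>i\<le>m. x i ^ \<alpha> i)" using assms finite_monomials by (simp add: sum.delta')
    finally show "(\<Prod>i\<le>m. x i ^ \<alpha> i) = feval m d (\<lambda>b. if b = \<alpha> then 1 else 0) x" by simp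
  qed
qed

lemma isform_iff_eq: "isform m d f \<Longrightarrow> (\<And>x. g x = f x) \<Longrightarrow> isform m d g"
proof -
  assume "isform m d f" "\<And>x. g x = f x"
  then have "g = f" by auto
  with \<open>isform m d f\<close> show ?thesis by simp
qed

lemma isform_mult:
  assumes "isform m d1 f" "isform m d2 g" shows "isform m (d1 + d2) (\<lambda>x. f x * g x)"
proof -
  obtain F where F: "F \<in> forms m d1" "\<And>x. f x = feval m d1 F x" using assms(1) unfolding isform_def by auto
  obtain G where G: "G \<in> forms m d2" "\<And>x. g x = feval m d2 G x" using assms(2) unfolding isform_def by auto
  have eq: "f x * g x = (\<Sum>a\<in>monomials m d1. \<Sum>b\<in>monomials m d2. (F a * G b) * (\<Prod>i\<le>m. x i ^ (a i + b i)))" for x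
    by (simp add: F G feval_def sum_product power_add prod.distrib mult_ac)
  have mon: "(\<lambda>i. a i + b i) \<in> monomials m (d1 + d2)" if "a \<in> monomials m d1" "b \<in> monomials m d2" for a b
    using that by (auto simp: monomials_def sum.distrib)
  show ?thesis
    apply (rule isform_iff_eq[OF _ eq])
    apply (intro isform_sum finite_monomials isform_scale)
    using isform_monom[OF mon] by simp
qed

lemma isform_one: "isform m 0 (\<lambda>x. 1)"
proof -
  have "(\<lambda>_. 0::nat) \<in> monomials m 0" by (simp add: monomials_def)
  from isform_monom[OF this] show ?thesis by simp
qed

lemma isform_prod:
  assumes "finite I" "\<And>i. i \<in> I \<Longrightarrow> isform m (e i) (f i)"
  shows "isform m (\<Sum>i\<in>I. e i) (\<lambda>x. \<Prod>i\<in>I. f i x)"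
  using assms
proof (induction I rule: finite_induct)
  case empty then show ?case by (simp add: isform_one)
next
  case (insert a I) then show ?case by (simp add: isform_mult)
qed

lemma isform_power:
  assumes "isform m d f" shows "isform m (k * d) (\<lambda>x. f x ^ k)"
  using isform_prod[of "{..<k}" m "\<lambda>_. d" "\<lambda>_. f"] assms by simp

lemma isform_coord: "i \<le> m \<Longrightarrow> isform m 1 (\<lambda>x. x i)"
proof -
  assume i: "i \<le> m"
  have "(\<lambda>j. if j = i then 1 else 0::nat) \<in> monomials m 1" using i by (auto simp: monomials_def)
  from isform_monom[OF this] have "isform m 1 (\<lambda>x. \<Prod>j\<le>m. x j ^ (if j = i then 1 else 0))" .
  moreover have "(\<Prod>j\<le>m. x j ^ (if j = i then 1 else 0)) = x i" for x :: "nat \<Rightarrow> complex"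
    using i by (simp add: if_distrib prod.If_cases)
  ultimately show ?thesis by (simp cong: prod.cong)
qed

lemma isform_linear: "isform m 1 (\<lambda>x. \<Sum>j\<le>m. c j * x j)"
  by (intro isform_sum isform_scale isform_coord) auto

lemma isform_comp:
  assumes "H \<in> forms m d" shows "isform m d (\<lambda>y. feval m d H (matvec m m P y))"
proof -
  have eq: "feval m d H (matvec m m P y) = (\<Sum>a\<in>monomials m d. H a * (\<Prod>i\<le>m. (\<Sum>j\<le>m. P i j * y j) ^ a i))" for y
    by (simp add: feval_def matvec_def)
  have "isform m d (\<lambda>y. \<Prod>i\<le>m. (\<Sum>j\<le>m. P i j * y j) ^ a i)" if a: "a \<in> monomials m d" for a
  proof -
    have "isform m (\<Sum>i\<le>m. a i * 1) (\<lambda>y. \<Prod>i\<le>m. (\<Sum>j\<le>m. P i j * y j) ^ a i)"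
      by (intro isform_prod isform_power isform_linear) auto
    then show ?thesis using a by (simp add: monomials_def)
  qed
  then show ?thesis
    by (subst eq) (intro isform_sum finite_monomials isform_scale)
qed



definition Dv :: "nat \<Rightarrow> nat \<Rightarrow> ((nat\<Rightarrow>nat)\<Rightarrow>complex) \<Rightarrow> (nat\<Rightarrow>complex) \<Rightarrow> (nat\<Rightarrow>complex) \<Rightarrow> complex" where
"Dv m d H z v = (\<Sum>\<alpha>\<in>monomials m d. H \<alpha> * (\<Sum>i\<le>m. (of_nat (\<alpha> i) * z i ^ (\<alpha> i - 1) * v i) * (\<Prod>j\<in>{..m}-{i}. z j ^ \<alpha> j)))"

lemma dderiv_feval: "dderiv (feval m d H) z v = Dv m d H z v"
proof -
  have pw: "((\<lambda>s. (z i + s * v i) ^ (\<alpha> i)) has_field_derivative (of_nat (\<alpha> i) * z i ^ (\<alpha> i - 1) * v i)) (at 0)"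
    for \<alpha> :: "nat \<Rightarrow> nat" and i
  proof -
    have "((\<lambda>s. z i + s * v i) has_field_derivative v i) (at 0)"
      by (auto intro!: derivative_eq_intros)
    from DERIV_power[OF this, of "\<alpha> i"] show ?thesis by (simp add: mult_ac)
  qed
  have pr: "((\<lambda>s. \<Prod>i\<le>m. (z i + s * v i) ^ (\<alpha> i)) has_field_derivative
      (\<Sum>i\<le>m. (of_nat (\<alpha> i) * z i ^ (\<alpha> i - 1) * v i) * (\<Prod>j\<in>{..m}-{i}. z j ^ \<alpha> j))) (at 0)" for \<alpha>
    using has_field_derivative_prod[of "{..m}" "\<lambda>i s. (z i + s * v i) ^ (\<alpha> i)" "\<lambda>i. of_nat (\<alpha> i) * z i ^ (\<alpha> i - 1) * v i" 0] pw by simp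
  have "((\<lambda>s. \<Sum>\<alpha>\<in>monomials m d. H \<alpha> * (\<Prod>i\<le>m. (z i + s * v i) ^ (\<alpha> i))) has_field_derivative Dv m d H z v) (at 0)"
    unfolding Dv_def by (intro DERIV_sum DERIV_cmult pr)
  then show ?thesis unfolding dderiv_def feval_def by (rule DERIV_imp_deriv)
qed

lemma Dv_lin: "Dv m d H z (\<lambda>i. a * v i + w i) = a * Dv m d H z v + Dv m d H z w"
  unfolding Dv_def
  by (simp add: sum_distrib_left sum.distrib[symmetric] algebra_simps)

lemma isform_Dv:
  assumes "H \<in> forms m d" "d \<ge> 1"
  shows "isform m (d - 1) (\<lambda>x. Dv m d H x w)"
  unfolding Dv_def
proof (intro isform_sum finite_monomials isform_scale)
  fix \<alpha> i assume a: "\<alpha> \<in> monomials m d" and i: "i \<in> {..m}"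
  show "isform m (d - 1) (\<lambda>x. of_nat (\<alpha> i) * x i ^ (\<alpha> i - 1) * w i * (\<Prod>j\<in>{..m} - {i}. x j ^ \<alpha> j))"
  proof (cases "\<alpha> i = 0")
    case True then show ?thesis by (simp add: isform_zero)
  next
    case False
    define b where "b = (\<lambda>j. if j = i then \<alpha> i - 1 else \<alpha> j)"
    have sa: "(\<Sum>j\<le>m. \<alpha> j) = \<alpha> i + (\<Sum>j\<in>{..m}-{i}. \<alpha> j)" using i by (simp add: sum.remove)
    have sb: "(\<Sum>j\<le>m. b j) = b i + (\<Sum>j\<in>{..m}-{i}. b j)" using i by (simp add: sum.remove)
    have "(\<Sum>j\<in>{..m}-{i}. b j) = (\<Sum>j\<in>{..m}-{i}. \<alpha> j)" by (rule sum.cong) (auto simp: b_def)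
    then have "b \<in> monomials m (d - 1)" using a False sa sb i by (auto simp: monomials_def b_def)
    from isform_monom[OF this] have "isform m (d-1) (\<lambda>x. \<Prod>j\<le>m. x j ^ b j)" .
    moreover have "(\<Prod>j\<le>m. x j ^ b j) = x i ^ (\<alpha> i - 1) * (\<Prod>j\<in>{..m} - {i}. x j ^ \<alpha> j)" for x :: "nat \<Rightarrow> complex"
    proof -
      have "(\<Prod>j\<le>m. x j ^ b j) = x i ^ b i * (\<Prod>j\<in>{..m} - {i}. x j ^ b j)" using i by (simp add: prod.remove)
      also have "(\<Prod>j\<in>{..m} - {i}. x j ^ b j) = (\<Prod>j\<in>{..m} - {i}. x j ^ \<alpha> j)" by (rule prod.cong) (auto simp: b_def)
      finally show ?thesis by (simp add: b_def)
    qed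
    ultimately have "isform m (d-1) (\<lambda>x. (of_nat (\<alpha> i) * w i) * (x i ^ (\<alpha> i - 1) * (\<Prod>j\<in>{..m} - {i}. x j ^ \<alpha> j)))"
      using isform_scale by auto
    then show ?thesis by (simp add: mult_ac)
  qed
qed simp



lemma digits_inj:
  fixes B :: nat
  shows "(\<forall>i\<le>n. a i < B) \<Longrightarrow> (\<forall>i\<le>n. b i < B) \<Longrightarrow> (\<Sum>i\<le>n. a i * B^i) = (\<Sum>i\<le>n. b i * B^i) \<Longrightarrow> i \<le> n \<Longrightarrow> a i = b i"
proof (induction n arbitrary: a b i)
  case 0 then show ?case by simp
next
  case (Suc n)
  have ea: "(\<Sum>i\<le>Suc n. a i * B^i) = a 0 + B * (\<Sum>i\<le>n. a (Suc i) * B^i)"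
    by (simp add: sum.atMost_Suc_shift sum_distrib_left mult_ac del: sum.atMost_Suc)
  have eb: "(\<Sum>i\<le>Suc n. b i * B^i) = b 0 + B * (\<Sum>i\<le>n. b (Suc i) * B^i)"
    by (simp add: sum.atMost_Suc_shift sum_distrib_left mult_ac del: sum.atMost_Suc)
  have a0: "a 0 < B" and b0: "b 0 < B" using Suc.prems by auto
  have E: "a 0 + B * (\<Sum>i\<le>n. a (Suc i) * B^i) = b 0 + B * (\<Sum>i\<le>n. b (Suc i) * B^i)"
    using Suc.prems(3) ea eb by simp
  have "(a 0 + B * (\<Sum>i\<le>n. a (Suc i) * B^i)) mod B = a 0" using a0 by simp
  moreover have "(b 0 + B * (\<Sum>i\<le>n. b (Suc i) * B^i)) mod B = b 0" using b0 by simp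
  ultimately have e0: "a 0 = b 0" using E by metis
  have "(a 0 + B * (\<Sum>i\<le>n. a (Suc i) * B^i)) div B = (\<Sum>i\<le>n. a (Suc i) * B^i)" using a0 by simp
  moreover have "(b 0 + B * (\<Sum>i\<le>n. b (Suc i) * B^i)) div B = (\<Sum>i\<le>n. b (Suc i) * B^i)" using b0 by simp
  ultimately have es: "(\<Sum>i\<le>n. a (Suc i) * B^i) = (\<Sum>i\<le>n. b (Suc i) * B^i)" using E by metis
  show ?case
  proof (cases i)
    case 0 then show ?thesis using e0 by simp
  next
    case (Suc j)
    have "a (Suc j) = b (Suc j)"
      using Suc.IH[of "\<lambda>i. a (Suc i)" "\<lambda>i. b (Suc i)" j] Suc.prems es Suc by auto
    then show ?thesis using Suc by simp
  qed
qed

lemma feval_nonzero: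
  assumes G: "G \<in> forms m d" "G \<noteq> (\<lambda>_. 0)"
  shows "\<exists>x\<in>vecs m. feval m d G x \<noteq> 0"
proof -
  define B where "B = Suc d"
  define e where "e = (\<lambda>a::nat\<Rightarrow>nat. \<Sum>i\<le>m. a i * B^i)"
  have bd: "a i < B" if "a \<in> monomials m d" "i \<le> m" for a i
  proof -
    have "a i \<le> (\<Sum>j\<le>m. a j)" using that by (intro member_le_sum) auto
    then show ?thesis using that by (simp add: monomials_def B_def)
  qed
  have einj: "a = b" if "a \<in> monomials m d" "b \<in> monomials m d" "e a = e b" for a b
  proof
    fix i show "a i = b i"
    proof (cases "i \<le> m")
      case True then show ?thesis using digits_inj[of m a B b i] bd that by (auto simp: e_def)
    next
      case False then show ?thesis using that by (auto simp: monomials_def)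
    qed
  qed
  obtain a0 where a0: "G a0 \<noteq> 0" using G(2) by auto
  then have a0S: "a0 \<in> monomials m d" using G(1) by (auto simp: forms_def)
  define p where "p = (\<Sum>a\<in>monomials m d. monom (G a) (e a))"
  have "coeff p (e a0) = (\<Sum>a\<in>monomials m d. if a = a0 then G a else 0)"
    unfolding p_def coeff_sum coeff_monom
    by (rule sum.cong) (use einj a0S in auto)
  also have "\<dots> = G a0" using a0S finite_monomials by (simp add: sum.delta')
  finally have "p \<noteq> 0" using a0 by auto
  then obtain s where s: "poly p s \<noteq> 0" using poly_all_0_iff_0 by blast
  define x where "x = (\<lambda>i. if i \<le> m then s ^ (B^i) else 0)"
  have "x \<in> vecs m" by (simp add: x_def vecs_def)
  moreover have "feval m d G x = poly p s"
    unfolding feval_def p_def poly_sum poly_monom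
  proof (rule sum.cong)
    fix a assume "a \<in> monomials m d"
    have "(\<Prod>i\<le>m. x i ^ a i) = (\<Prod>i\<le>m. s ^ (a i * B^i))"
      by (rule prod.cong) (auto simp: x_def power_mult[symmetric] mult.commute)
    also have "\<dots> = s ^ e a" by (simp add: e_def power_sum)
    finally show "G a * (\<Prod>i\<le>m. x i ^ a i) = G a * s ^ e a" by simp
  qed simp
  ultimately show ?thesis using s by metis
qed



definition KK :: "nat \<Rightarrow> nat \<Rightarrow> nat" where "KK n d = card (monomials n d)"
definition NN :: "nat \<Rightarrow> nat \<Rightarrow> nat" where "NN n d = n + KK n d"
definition en :: "nat \<Rightarrow> nat \<Rightarrow> nat \<Rightarrow> (nat \<Rightarrow> nat)" where
  "en n d = (SOME h. bij_betw h {0..<KK n d} (monomials n d))"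
definition ix :: "nat \<Rightarrow> nat \<Rightarrow> (nat \<Rightarrow> nat) \<Rightarrow> nat" where
  "ix n d a = n + 1 + inv_into {0..<KK n d} (en n d) a"
definition im :: "nat \<Rightarrow> (nat \<Rightarrow> nat) \<Rightarrow> nat" where
  "im n a = (if \<exists>i. 1 \<le> i \<and> i \<le> n \<and> 0 < a i then SOME i. 1 \<le> i \<and> i \<le> n \<and> 0 < a i else 0)"
definition dm :: "nat \<Rightarrow> (nat \<Rightarrow> nat) \<Rightarrow> (nat \<Rightarrow> nat)" where
  "dm n a = (\<lambda>k. if k = im n a then a k - 1 else a k)"
definition bet :: "nat \<Rightarrow> nat \<Rightarrow> (nat \<Rightarrow> nat) \<Rightarrow> (nat \<Rightarrow> nat)" where
  "bet n d a = (\<lambda>k. if k \<le> n then dm n a k else if k = ix n d a then 1 else 0)"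
definition FF :: "nat \<Rightarrow> nat \<Rightarrow> ((nat \<Rightarrow> nat) \<Rightarrow> complex)" where
  "FF n d = (\<lambda>b. if b \<in> bet n d ` monomials n d then 1 else 0)"
definition a0 :: "nat \<Rightarrow> (nat \<Rightarrow> nat)" where "a0 d = (\<lambda>i. if i = 0 then d else 0)"

lemma en_bij: "bij_betw (en n d) {0..<KK n d} (monomials n d)"
proof -
  have "\<exists>h. bij_betw h {0..<KK n d} (monomials n d)"
    unfolding KK_def by (rule ex_bij_betw_nat_finite[OF finite_monomials])
  then show ?thesis unfolding en_def by (rule someI_ex)
qed

lemma ix_props:
  assumes "a \<in> monomials n d"
  shows "n < ix n d a" "ix n d a \<le> NN n d" "en n d (ix n d a - n - 1) = a"
proof -
  have "inv_into {0..<KK n d} (en n d) a \<in> {0..<KK n d}"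
    using en_bij assms by (metis bij_betw_def inv_into_into)
  then show "n < ix n d a" "ix n d a \<le> NN n d" by (auto simp: ix_def NN_def)
  show "en n d (ix n d a - n - 1) = a" using en_bij assms
    by (simp add: ix_def bij_betw_def f_inv_into_f)
qed

lemma en_props:
  assumes "n < i" "i \<le> NN n d"
  shows "en n d (i - n - 1) \<in> monomials n d" "ix n d (en n d (i - n - 1)) = i"
proof -
  have j: "i - n - 1 \<in> {0..<KK n d}" using assms by (auto simp: NN_def)
  then show "en n d (i - n - 1) \<in> monomials n d" using bij_betwE[OF en_bij] by blast
  have "inv_into {0..<KK n d} (en n d) (en n d (i - n - 1)) = i - n - 1"
    using en_bij j by (simp add: bij_betw_def inv_into_f_f)
  then show "ix n d (en n d (i - n - 1)) = i" using assms by (simp add: ix_def)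
qed

lemma ix_inj: "inj_on (ix n d) (monomials n d)"
  by (rule inj_onI) (metis ix_props(3))

lemma a0_mon: "a0 d \<in> monomials n d"
  by (auto simp: a0_def monomials_def)

lemma im_props:
  assumes "a \<in> monomials n d" "d \<ge> 1"
  shows "im n a \<le> n" "0 < a (im n a)" "im n a = 0 \<Longrightarrow> a = a0 d"
proof -
  let ?P = "\<lambda>i. 1 \<le> i \<and> i \<le> n \<and> 0 < a i"
  have sumsplit: "(\<Sum>i\<le>n. a i) = a 0 + (\<Sum>i\<in>{1..n}. a i)"
    by (simp add: atMost_atLeast0 sum.atLeast_Suc_atMost)
  have key: "im n a \<le> n \<and> 0 < a (im n a) \<and> (im n a = 0 \<longrightarrow> a = a0 d)"
  proof (cases "\<exists>i. ?P i")
    case True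
    then have "?P (SOME i. ?P i)" by (rule someI_ex)
    moreover have "im n a = (SOME i. ?P i)" using True by (simp add: im_def)
    ultimately show ?thesis by auto
  next
    case False
    then have z: "\<forall>i\<in>{1..n}. a i = 0" by auto
    then have "(\<Sum>i\<in>{1..n}. a i) = 0" by simp
    then have "a 0 = d" using sumsplit assms by (simp add: monomials_def)
    have i0: "im n a = 0" unfolding im_def by (rule if_not_P[OF False])
    have "a = a0 d"
    proof
      fix i show "a i = a0 d i"
      proof (cases "i = 0")
        case True then show ?thesis using \<open>a 0 = d\<close> by (simp add: a0_def)
      next
        case False
        show ?thesis
        proof (cases "i \<le> n")
          case True then show ?thesis using z False by (auto simp: a0_def)
        next
          case f2: False then show ?thesis using assms(1) False by (auto simp: a0_def monomials_def)
        qed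
      qed
    qed
    then show ?thesis using i0 \<open>a 0 = d\<close> assms by simp
  qed
  then show "im n a \<le> n" "0 < a (im n a)" "im n a = 0 \<Longrightarrow> a = a0 d" by auto
qed

lemma prod_dm:
  assumes "a \<in> monomials n d" "d \<ge> 1"
  shows "y (im n a) * (\<Prod>k\<le>n. y k ^ dm n a k) = (\<Prod>k\<le>n. (y k :: complex) ^ a k)"
proof -
  define i where "i = im n a"
  have i: "i \<in> {..n}" "0 < a i" using im_props[OF assms] by (auto simp: i_def)
  obtain j where j: "a i = Suc j" using i(2) gr0_implies_Suc by blast
  have dmi: "dm n a i = j" using j by (simp add: dm_def i_def)
  have r: "(\<Prod>k\<in>{..n}-{i}. y k ^ dm n a k) = (\<Prod>k\<in>{..n}-{i}. y k ^ a k)"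
    by (rule prod.cong) (auto simp: dm_def i_def)
  have "(\<Prod>k\<le>n. y k ^ dm n a k) = y i ^ dm n a i * (\<Prod>k\<in>{..n}-{i}. y k ^ dm n a k)"
    using i(1) by (rule prod.remove[OF finite_atMost])
  moreover have "(\<Prod>k\<le>n. y k ^ a k) = y i ^ a i * (\<Prod>k\<in>{..n}-{i}. y k ^ a k)"
    using i(1) by (rule prod.remove[OF finite_atMost])
  ultimately show ?thesis unfolding i_def[symmetric] using r dmi j by simp
qed

lemma bet_mon:
  assumes "a \<in> monomials n d" "d \<ge> 1"
  shows "bet n d a \<in> monomials (NN n d) d"
proof -
  have ip: "n < ix n d a" "ix n d a \<le> NN n d" using ix_props[OF assms(1)] by auto
  have i: "im n a \<in> {..n}" "0 < a (im n a)" using im_props[OF assms] by auto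
  have s1: "(\<Sum>k\<le>NN n d. bet n d a k) = (\<Sum>k\<le>n. bet n d a k) + (\<Sum>k\<in>{n<..NN n d}. bet n d a k)"
  proof -
    have "{..NN n d} = {..n} \<union> {n<..NN n d}" using ip by auto
    then show ?thesis by (simp only:) (rule sum.union_disjoint, auto)
  qed
  have s2: "(\<Sum>k\<in>{n<..NN n d}. bet n d a k) = 1"
  proof -
    have "(\<Sum>k\<in>{n<..NN n d}. bet n d a k) = (\<Sum>k\<in>{n<..NN n d}. if k = ix n d a then 1 else 0)"
      by (rule sum.cong) (auto simp: bet_def)
    then show ?thesis using ip by simp
  qed
  have s3: "(\<Sum>k\<le>n. bet n d a k) = d - 1"
  proof -
    have "(\<Sum>k\<le>n. bet n d a k) = (\<Sum>k\<le>n. dm n a k)" by (rule sum.cong) (auto simp: bet_def)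
    also have "\<dots> = dm n a (im n a) + (\<Sum>k\<in>{..n}-{im n a}. dm n a k)" using i by (simp add: sum.remove)
    also have "(\<Sum>k\<in>{..n}-{im n a}. dm n a k) = (\<Sum>k\<in>{..n}-{im n a}. a k)" by (rule sum.cong) (auto simp: dm_def)
    also have "d = a (im n a) + (\<Sum>k\<in>{..n}-{im n a}. a k)"
      using i assms(1) by (simp add: sum.remove monomials_def)
    ultimately show ?thesis using i by (simp add: dm_def)
  qed
  show ?thesis using s1 s2 s3 assms(2) ip by (auto simp: monomials_def bet_def)
qed

lemma bet_inj: "inj_on (bet n d) (monomials n d)"
proof (rule inj_onI)
  fix a b assume a: "a \<in> monomials n d" and b: "b \<in> monomials n d" and e: "bet n d a = bet n d b"
  have "bet n d a (ix n d a) = 1" using ix_props[OF a] by (simp add: bet_def)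
  then have "bet n d b (ix n d a) = 1" using e by simp
  then have "ix n d a = ix n d b" using ix_props[OF a] by (auto simp: bet_def split: if_splits)
  then show "a = b" using ix_inj a b by (auto dest: inj_onD)
qed

lemma FF_forms: "d \<ge> 1 \<Longrightarrow> FF n d \<in> forms (NN n d) d"
  using bet_mon by (auto simp: FF_def forms_def)

lemma feval_FF:
  assumes "d \<ge> 1"
  shows "feval (NN n d) d (FF n d) z = (\<Sum>a\<in>monomials n d. z (ix n d a) * (\<Prod>k\<le>n. z k ^ dm n a k))"
proof -
  have sub: "bet n d ` monomials n d \<subseteq> monomials (NN n d) d" using bet_mon assms by auto
  have "feval (NN n d) d (FF n d) z = (\<Sum>b\<in>bet n d ` monomials n d. \<Prod>k\<le>NN n d. z k ^ b k)"
    unfolding feval_def FF_def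
    by (rule sum.mono_neutral_cong_right) (use sub finite_monomials in auto)
  also have "\<dots> = (\<Sum>a\<in>monomials n d. \<Prod>k\<le>NN n d. z k ^ bet n d a k)"
    by (simp add: sum.reindex[OF bet_inj])
  also have "\<dots> = (\<Sum>a\<in>monomials n d. z (ix n d a) * (\<Prod>k\<le>n. z k ^ dm n a k))"
  proof (rule sum.cong)
    fix a assume a: "a \<in> monomials n d"
    have ip: "n < ix n d a" "ix n d a \<le> NN n d" using ix_props[OF a] by auto
    have "{..NN n d} = {..n} \<union> {n<..NN n d}" using ip by auto
    then have "(\<Prod>k\<le>NN n d. z k ^ bet n d a k) = (\<Prod>k\<le>n. z k ^ bet n d a k) * (\<Prod>k\<in>{n<..NN n d}. z k ^ bet n d a k)"
      by (simp only:) (rule prod.union_disjoint, auto)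
    also have "(\<Prod>k\<le>n. z k ^ bet n d a k) = (\<Prod>k\<le>n. z k ^ dm n a k)" by (rule prod.cong) (auto simp: bet_def)
    also have "(\<Prod>k\<in>{n<..NN n d}. z k ^ bet n d a k) = (\<Prod>k\<in>{n<..NN n d}. if k = ix n d a then z k else 1)"
      by (rule prod.cong) (auto simp: bet_def)
    also have "\<dots> = z (ix n d a)" using ip by simp
    finally show "(\<Prod>k\<le>NN n d. z k ^ bet n d a k) = z (ix n d a) * (\<Prod>k\<le>n. z k ^ dm n a k)" by simp
  qed simp
  finally show ?thesis .
qed



definition mkA :: "nat \<Rightarrow> nat \<Rightarrow> (nat \<Rightarrow> nat \<Rightarrow> complex) \<Rightarrow> (nat \<Rightarrow> nat \<Rightarrow> complex) \<Rightarrow> ((nat \<Rightarrow> nat) \<Rightarrow> complex) \<Rightarrow> nat \<Rightarrow> nat \<Rightarrow> complex" where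
  "mkA n d Y Mm c = (\<lambda>i j. if i \<le> n then Y i j else if i \<le> NN n d then c (en n d (i-n-1)) * Mm (im n (en n d (i-n-1))) j else 0)"

lemma NN_ge: "n \<le> NN n d" by (simp add: NN_def)

lemma matvec_mkA_low: "k \<le> n \<Longrightarrow> matvec (NN n d) n (mkA n d Y Mm c) x k = matvec n n Y x k"
  using NN_ge[of n d] by (simp add: matvec_def mkA_def)

lemma matvec_mkA_high:
  assumes "n < i" "i \<le> NN n d" "d \<ge> 1"
  shows "matvec (NN n d) n (mkA n d Y Mm c) x i = c (en n d (i-n-1)) * matvec n n Mm x (im n (en n d (i-n-1)))"
proof -
  have "im n (en n d (i-n-1)) \<le> n" using im_props(1)[OF en_props(1)[OF assms(1,2)] assms(3)] .
  then show ?thesis using assms by (simp add: matvec_def mkA_def sum_distrib_left mult.assoc)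
qed

lemma matvec_mkA_ix:
  assumes "a \<in> monomials n d" "d \<ge> 1"
  shows "matvec (NN n d) n (mkA n d Y Mm c) x (ix n d a) = c a * matvec n n Mm x (im n a)"
  using matvec_mkA_high[OF ix_props(1,2)[OF assms(1)] assms(2)] ix_props(3)[OF assms(1)] by simp

lemma F_mkA:
  assumes "d \<ge> 1"
  shows "feval (NN n d) d (FF n d) (matvec (NN n d) n (mkA n d Y Mm c) x) =
         (\<Sum>a\<in>monomials n d. c a * (matvec n n Mm x (im n a) * (\<Prod>k\<le>n. matvec n n Y x k ^ dm n a k)))"
  unfolding feval_FF[OF assms]
  by (rule sum.cong) (simp_all add: matvec_mkA_ix[OF _ assms] matvec_mkA_low mult.assoc)

lemma F_mkA_same:
  assumes "d \<ge> 1"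
  shows "feval (NN n d) d (FF n d) (matvec (NN n d) n (mkA n d Mm Mm c) x) = feval n d c (matvec n n Mm x)"
proof -
  have "(\<Sum>a\<in>monomials n d. c a * (matvec n n Mm x (im n a) * (\<Prod>k\<le>n. matvec n n Mm x k ^ dm n a k))) = feval n d c (matvec n n Mm x)"
    unfolding feval_def by (rule sum.cong) (simp_all add: prod_dm[OF _ assms])
  then show ?thesis using F_mkA[OF assms] by simp
qed

definition sg :: "nat \<Rightarrow> nat \<Rightarrow> nat" where "sg k j = (if j = 0 then k else if j = k then 0 else j)"
definition Mmat :: "nat \<Rightarrow> (nat \<Rightarrow> complex) \<Rightarrow> nat \<Rightarrow> nat \<Rightarrow> complex" where
  "Mmat k t i j = (if i = 0 then (if j = k then 1 else 0) else (if j = sg k i then 1 else 0) - (if j = k then t (sg k i) else 0))"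
definition Pmat :: "nat \<Rightarrow> (nat \<Rightarrow> complex) \<Rightarrow> nat \<Rightarrow> nat \<Rightarrow> complex" where
  "Pmat k t i j = (if j = 0 then t i else 0) + (if i \<noteq> k \<and> j = sg k i then 1 else 0)"

lemma sg_le: "k \<le> n \<Longrightarrow> i \<le> n \<Longrightarrow> sg k i \<le> n" by (simp add: sg_def)
lemma sg_sg: "sg k (sg k i) = i" by (simp add: sg_def)
lemma sg_0: "sg k i = 0 \<longleftrightarrow> i = k" by (auto simp: sg_def)

lemma sum_delta_mult: "j0 \<le> (n::nat) \<Longrightarrow> (\<Sum>j\<le>n. (if j = j0 then c else 0) * (x j :: complex)) = c * x j0"
proof -
  assume j0: "j0 \<le> n"
  have "(\<Sum>j\<le>n. (if j = j0 then c else 0) * x j) = (\<Sum>j\<le>n. if j = j0 then c * x j else 0)"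
    by (rule sum.cong) auto
  also have "\<dots> = c * x j0" using j0 by (simp add: sum.delta)
  finally show ?thesis .
qed

lemma Mvec:
  assumes "k \<le> n" "i \<le> n"
  shows "matvec n n (Mmat k t) x i = (if i = 0 then x k else x (sg k i) - x k * t (sg k i))"
proof (cases "i = 0")
  case True then show ?thesis using assms by (simp add: matvec_def Mmat_def sum_delta_mult)
next
  case False
  have "matvec n n (Mmat k t) x i = (\<Sum>j\<le>n. (if j = sg k i then 1 else 0) * x j - (if j = k then t (sg k i) else 0) * x j)"
    using False assms by (simp add: matvec_def Mmat_def left_diff_distrib)
  also have "\<dots> = x (sg k i) - t (sg k i) * x k"
    using assms sg_le[OF assms] by (simp add: sum_subtractf sum_delta_mult)
  finally show ?thesis using False by simp
qed

lemma Pvec: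
  assumes "k \<le> n" "i \<le> n"
  shows "matvec n n (Pmat k t) y i = y 0 * t i + (if i \<noteq> k then y (sg k i) else 0)"
proof -
  have "matvec n n (Pmat k t) y i = (\<Sum>j\<le>n. (if j = 0 then t i else 0) * y j + (if j = sg k i then (if i \<noteq> k then 1 else 0) else 0) * y j)"
    using assms by (simp add: matvec_def Pmat_def distrib_right)
  also have "\<dots> = t i * y 0 + (if i \<noteq> k then 1 else 0) * y (sg k i)"
    using assms sg_le[OF assms] by (simp add: sum.distrib sum_delta_mult del: if_image_distrib)
  finally show ?thesis by auto
qed

lemma PM:
  assumes "k \<le> n" "t k = 1" "x \<in> vecs n"
  shows "matvec n n (Pmat k t) (matvec n n (Mmat k t) x) = x"
proof
  fix i show "matvec n n (Pmat k t) (matvec n n (Mmat k t) x) i = x i"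
  proof (cases "i \<le> n")
    case False then show ?thesis using assms(3) by (simp add: matvec_def vecs_def)
  next
    case True
    show ?thesis
    proof (cases "i = k")
      case True then show ?thesis using assms \<open>i \<le> n\<close> by (simp add: Pvec Mvec)
    next
      case False
      have "sg k i \<noteq> 0" using False sg_0 by auto
      then show ?thesis using assms \<open>i \<le> n\<close> False sg_le[OF assms(1) \<open>i \<le> n\<close>]
        by (simp add: Pvec Mvec sg_sg algebra_simps)
    qed
  qed
qed

lemma Mt:
  assumes "k \<le> n" "t k = 1"
  shows "matvec n n (Mmat k t) t = (\<lambda>i. if i = 0 then 1 else 0)"
proof
  fix i show "matvec n n (Mmat k t) t i = (if i = 0 then 1 else 0)"
  proof (cases "i \<le> n")
    case True then show ?thesis using assms by (simp add: Mvec)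
  next
    case False then show ?thesis by (simp add: matvec_def)
  qed
qed

lemma Pe0:
  assumes "k \<le> n" "t \<in> vecs n"
  shows "matvec n n (Pmat k t) (\<lambda>i. if i = 0 then 1 else 0) = t"
proof
  fix i show "matvec n n (Pmat k t) (\<lambda>i. if i = 0 then 1 else 0) i = t i"
  proof (cases "i \<le> n")
    case False then show ?thesis using assms(2) by (simp add: matvec_def vecs_def)
  next
    case True then show ?thesis using assms by (simp add: Pvec sg_0)
  qed
qed

lemma feval_e0:
  assumes "d \<ge> 1"
  shows "feval m d H (\<lambda>i. if i = 0 then 1 else 0) = H (a0 d)"
proof -
  have pr: "(\<Prod>i\<le>m. (if i = 0 then 1 else 0::complex) ^ b i) = (if b = a0 d then 1 else 0)"
    if b: "b \<in> monomials m d" for b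
  proof (cases "b = a0 d")
    case True
    have "(\<Prod>i\<le>m. (if i = 0 then 1 else 0::complex) ^ b i) = (\<Prod>i\<le>m. 1)"
      by (rule prod.cong) (auto simp: True a0_def)
    then show ?thesis using True by simp
  next
    case False
    have "im m b \<noteq> 0" using im_props(3)[OF b assms] False by auto
    moreover have "im m b \<le> m" "0 < b (im m b)" using im_props[OF b assms] by auto
    ultimately have "(if im m b = 0 then 1 else 0::complex) ^ b (im m b) = 0" by simp
    then have "\<exists>i\<in>{..m}. (if i = 0 then 1 else 0::complex) ^ b i = 0"
      using \<open>im m b \<le> m\<close> by blast
    then have "(\<Prod>i\<le>m. (if i = 0 then 1 else 0::complex) ^ b i) = 0"
      by (rule prod_zero[OF finite_atMost])
    then show ?thesis using False by simp
  qed
  have "feval m d H (\<lambda>i. if i = 0 then 1 else 0) = (\<Sum>b\<in>monomials m d. if b = a0 d then H b else 0)"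
    unfolding feval_def by (rule sum.cong) (simp_all add: pr)
  also have "\<dots> = H (a0 d)" using a0_mon finite_monomials by (simp add: sum.delta')
  finally show ?thesis .
qed

lemma feval_homog:
  assumes "H \<in> forms m d"
  shows "feval m d H (\<lambda>i. c * x i) = c ^ d * feval m d H x"
  unfolding feval_def sum_distrib_left
proof (rule sum.cong)
  fix a assume a: "a \<in> monomials m d"
  have "(\<Prod>i\<le>m. (c * x i) ^ a i) = c ^ (\<Sum>i\<le>m. a i) * (\<Prod>i\<le>m. x i ^ a i)"
    by (simp add: power_mult_distrib prod.distrib power_sum)
  then show "H a * (\<Prod>i\<le>m. (c * x i) ^ a i) = c ^ d * (H a * (\<Prod>i\<le>m. x i ^ a i))"
    using a by (simp add: monomials_def)
qed simp

lemma matvec_lin: "matvec N r A (\<lambda>j. x j + s * v j) = (\<lambda>i. matvec N r A x i + s * matvec N r A v i)"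
  by (auto simp: matvec_def sum.distrib sum_distrib_left algebra_simps)

lemma feval_lin: "feval m d (\<lambda>a. g a + s * r a) y = feval m d g y + s * feval m d r y"
  by (simp add: feval_def sum.distrib sum_distrib_left algebra_simps)

lemma deriv_affine: "deriv (\<lambda>s. a + s * (b::complex)) 0 = b"
  by (rule DERIV_imp_deriv) (auto intro!: derivative_eq_intros)



lemma mkA_t_high:
  assumes "n < i" "d \<ge> 1" "k \<le> n" "t k = 1" "c (a0 d) = 0"
  shows "matvec (NN n d) n (mkA n d Y (Mmat k t) c) t i = 0"
proof (cases "i \<le> NN n d")
  case False then show ?thesis by (simp add: matvec_def)
next
  case True
  define a where "a = en n d (i-n-1)"
  have a: "a \<in> monomials n d" using en_props(1)[OF assms(1) True] by (simp add: a_def)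
  have "matvec (NN n d) n (mkA n d Y (Mmat k t) c) t i = c a * matvec n n (Mmat k t) t (im n a)"
    using matvec_mkA_high[OF assms(1) True assms(2)] by (simp add: a_def)
  also have "\<dots> = c a * (if im n a = 0 then 1 else 0)" by (simp add: Mt[where k=k and n=n and t=t, OF assms(3,4)])
  also have "\<dots> = 0" using im_props(3)[OF a assms(2)] assms(5) by auto
  finally show ?thesis .
qed

theorem lemma4p2:
  fixes n d :: nat
  assumes "n \<ge> 1" and "d \<ge> 1"
  shows "\<exists>N p F. pointed_hyp N d p F \<and>
           (\<forall>q G. pointed_hyp n d q G \<longrightarrow>
              (\<exists>A. param_section N n d p F A q G \<and>
                   (\<exists>t H. t \<in> vecs n \<and> matvec N n A t = p \<and> H \<in> forms n d \<and>
                          (\<forall>x\<in>vecs n. feval n d H x = feval N d F (matvec N n A x)) \<and>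
                          dphi_surj N n d F A t H)))"
proof -
  note d1 = assms(2)
  define N where "N = NN n d"
  define p :: "nat \<Rightarrow> complex" where "p = (\<lambda>i. if i = 0 then 1 else 0)"
  define F where "F = FF n d"
  have Nn: "n \<le> N" by (simp add: N_def NN_def)
  have Fp: "feval N d F p = 0"
  proof -
    have "p (ix n d a) = 0" if "a \<in> monomials n d" for a
      using ix_props(1)[OF that] by (simp add: p_def)
    then show ?thesis unfolding N_def F_def feval_FF[OF d1] by simp
  qed
  have FF0: "F \<noteq> (\<lambda>_. 0)"
  proof
    assume "F = (\<lambda>_. 0)"
    then have "F (bet n d (a0 d)) = 0" by simp
    then show False using a0_mon by (simp add: F_def FF_def)
  qed
  have ph: "pointed_hyp N d p F"
    unfolding pointed_hyp_def
    using Fp FF0 FF_forms[OF d1] by (auto simp: vecs_def p_def F_def N_def fun_eq_iff)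
  show ?thesis
  proof (rule exI[of _ N], rule exI[of _ p], rule exI[of _ F], intro conjI allI impI)
    show "pointed_hyp N d p F" by (rule ph)
    fix q G assume qG: "pointed_hyp n d q G"
    have qv: "q \<in> vecs n" and q0: "q \<noteq> (\<lambda>_. 0)" and Gf: "G \<in> forms n d" and G0: "G \<noteq> (\<lambda>_. 0)"
      and Gq: "feval n d G q = 0"
      using qG by (auto simp: pointed_hyp_def)
    obtain k where kq: "q k \<noteq> 0" using q0 by auto
    have kn: "k \<le> n" using kq qv by (auto simp: vecs_def not_le[symmetric])
    define t where "t = (\<lambda>i. inverse (q k) * q i)"
    have tk: "t k = 1" using kq by (simp add: t_def)
    have tv: "t \<in> vecs n" using qv by (simp add: t_def vecs_def)
    have Gt: "feval n d G t = 0" unfolding t_def feval_homog[OF Gf] Gq by simp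
    define M where "M = Mmat k t"
    define P where "P = Pmat k t"
    have PMx: "matvec n n P (matvec n n M x) = x" if "x \<in> vecs n" for x
      using PM[where k=k and n=n and t=t, OF kn tk that] by (simp add: P_def M_def)
    obtain G' where G'f: "G' \<in> forms n d" and G'e: "\<And>y. feval n d G (matvec n n P y) = feval n d G' y"
      using isform_comp[OF Gf, of P] unfolding isform_def by blast
    have G'a0: "G' (a0 d) = 0"
      using G'e[of "\<lambda>i. if i = 0 then 1 else 0"] feval_e0[OF d1, of n G'] Pe0[where k=k and n=n and t=t, OF kn tv] Gt
      by (simp add: P_def)
    define A where "A = mkA n d M M G'"
    have FA: "feval N d F (matvec N n A x) = feval n d G x" if "x \<in> vecs n" for x
    proof -
      have "feval N d F (matvec N n A x) = feval n d G' (matvec n n M x)"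
        unfolding N_def F_def A_def by (rule F_mkA_same[OF d1])
      also have "\<dots> = feval n d G (matvec n n P (matvec n n M x))" by (simp add: G'e)
      also have "\<dots> = feval n d G x" using PMx[OF that] by simp
      finally show ?thesis .
    qed
    have At: "matvec N n A t = p"
    proof
      fix i show "matvec N n A t i = p i"
      proof (cases "i \<le> n")
        case True
        then show ?thesis unfolding N_def A_def
          using matvec_mkA_low[OF True] Mt[where k=k and n=n and t=t, OF kn tk] by (simp add: p_def M_def)
      next
        case False
        then have "n < i" by simp
        then show ?thesis unfolding N_def A_def M_def
          using mkA_t_high[where n=n and i=i and d=d and k=k and t=t and c=G' and Y="Mmat k t", OF _ d1 kn tk G'a0] by (simp add: p_def)
      qed
    qed
    have Alow: "matvec N n A x i = matvec n n M x i" if "i \<le> n" for x i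
      unfolding N_def A_def by (rule matvec_mkA_low[OF that])
    have Ainj: "inj_on (matvec N n A) (vecs n)"
    proof (rule inj_onI)
      fix x y assume x: "x \<in> vecs n" and y: "y \<in> vecs n" and e: "matvec N n A x = matvec N n A y"
      have "matvec n n M x = matvec n n M y"
      proof
        fix i show "matvec n n M x i = matvec n n M y i"
        proof (cases "i \<le> n")
          case True then show ?thesis using Alow[of i x] Alow[of i y] fun_cong[OF e, of i] by simp
        next
          case False then show ?thesis by (simp add: matvec_def)
        qed
      qed
      then show "x = y" using PMx[OF x] PMx[OF y] by metis
    qed
    obtain x0 where x0: "x0 \<in> vecs n" "feval n d G x0 \<noteq> 0" using feval_nonzero[OF Gf G0] by blast
    have prop_p: "proportional (matvec N n A t) p" unfolding proportional_def At by (rule exI[of _ 1]) simp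
    have prop_q: "proportional t q" unfolding proportional_def t_def using kq
      by (intro exI[of _ "inverse (q k)"]) simp
    have PS: "param_section N n d p F A q G"
      unfolding param_section_def in_Gp_def
    proof (intro conjI)
      show "inj_on (matvec N n A) (vecs n)" by (rule Ainj)
      show "\<exists>t\<in>vecs n. proportional (matvec N n A t) p" using tv prop_p by blast
      show "\<exists>x\<in>vecs n. feval N d F (matvec N n A x) \<noteq> 0" using x0 FA by auto
      show "\<exists>t\<in>vecs n. proportional (matvec N n A t) p \<and> proportional t q" using tv prop_p prop_q by blast
      show "\<exists>c. c \<noteq> 0 \<and> (\<forall>x\<in>vecs n. feval N d F (matvec N n A x) = c * feval n d G x)"
        using FA by (intro exI[of _ 1]) simp
    qed
    have DS: "dphi_surj N n d F A t G"
      unfolding dphi_surj_def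
    proof
      fix z assume z: "z \<in> cone_tangent_U n d t G"
      obtain tw Hv where zz: "z = (tw, Hv)" by (cases z)
      have tw: "tw \<in> vecs n" and Hvf: "Hv \<in> forms n d" and tang: "feval n d Hv t + dderiv (feval n d G) t tw = 0"
        using z by (auto simp: cone_tangent_U_def zz)
      define R where "R = (\<lambda>x. feval n d Hv x + x k * Dv n d G x tw)"
      have "isform n (1 + (d - 1)) (\<lambda>x. x k * Dv n d G x tw)"
        by (rule isform_mult[OF isform_coord[OF kn] isform_Dv[OF Gf d1]])
      then have "isform n d (\<lambda>x. x k * Dv n d G x tw)" using d1 by simp
      then have "isform n d R" unfolding R_def by (intro isform_add feval_isform Hvf)
      then obtain R0 where R0f: "R0 \<in> forms n d" and R0e: "\<And>x. R x = feval n d R0 x"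
        unfolding isform_def by blast
      obtain R2 where R2f: "R2 \<in> forms n d" and R2e: "\<And>y. feval n d R0 (matvec n n P y) = feval n d R2 y"
        using isform_comp[OF R0f, of P] unfolding isform_def by blast
      have Rt: "R t = 0" using tang tk by (simp add: R_def dderiv_feval)
      have R2a0: "R2 (a0 d) = 0"
        using R2e[of "\<lambda>i. if i = 0 then 1 else 0"] feval_e0[OF d1, of n R2] Pe0[where k=k and n=n and t=t, OF kn tv] Rt R0e[of t]
        by (simp add: P_def)
      define U where "U = mkA n d (\<lambda>_ _. 0) M R2"
      define Av where "Av = (\<lambda>i j. (if j = k then - matvec N n A tw i else 0) + U i j)"
      have Avx: "matvec N n Av x = (\<lambda>i. (- x k) * matvec N n A tw i + matvec N n U x i)" for x
      proof
        fix i show "matvec N n Av x i = (- x k) * matvec N n A tw i + matvec N n U x i"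
        proof (cases "i \<le> N")
          case False then show ?thesis by (simp add: matvec_def)
        next
          case True
          have "matvec N n Av x i = (\<Sum>j\<le>n. (if j = k then - matvec N n A tw i else 0) * x j) + (\<Sum>j\<le>n. U i j * x j)"
            using True by (simp add: matvec_def Av_def distrib_right sum.distrib)
          also have "\<dots> = (- matvec N n A tw i) * x k + (\<Sum>j\<le>n. U i j * x j)"
            using kn by (simp only: sum_delta_mult)
          finally show ?thesis using True by (simp add: matvec_def mult.commute)
        qed
      qed
      have Ut: "matvec N n U t i = 0" for i
      proof (cases "i \<le> n")
        case True then show ?thesis unfolding U_def N_def using matvec_mkA_low[OF True] by (simp add: matvec_def)
      next
        case False then have "n < i" by simp
        then show ?thesis unfolding N_def U_def M_def
          using mkA_t_high[where n=n and i=i and d=d and k=k and t=t and c=R2 and Y="\<lambda>_ _. 0", OF _ d1 kn tk R2a0] by simp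
      qed
      have inG: "(Av, tw) \<in> cone_tangent_G N n A t"
        unfolding cone_tangent_G_def using tw Ut tk by (simp add: Avx)
      have key: "feval n d Hv x = dderiv (feval N d F) (matvec N n A x) (matvec N n Av x) + 0 * feval n d G x"
        if x: "x \<in> vecs n" for x
      proof -
        have e1: "Dv N d F (matvec N n A x) (matvec N n A tw) = Dv n d G x tw"
        proof -
          have vs: "(\<lambda>j. x j + s * tw j) \<in> vecs n" for s using x tw by (simp add: vecs_def)
          have "(\<lambda>s. feval N d F (\<lambda>j. matvec N n A x j + s * matvec N n A tw j)) = (\<lambda>s. feval n d G (\<lambda>j. x j + s * tw j))"
          proof
            fix s show "feval N d F (\<lambda>j. matvec N n A x j + s * matvec N n A tw j) = feval n d G (\<lambda>j. x j + s * tw j)"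
              using FA[OF vs[of s]] matvec_lin[of N n A x s tw] by simp
          qed
          then show ?thesis by (simp add: dderiv_feval[symmetric] dderiv_def)
        qed
        have e2: "Dv N d F (matvec N n A x) (matvec N n U x) = R x"
        proof -
          have vec: "(\<lambda>j. matvec N n A x j + s * matvec N n U x j) = matvec (NN n d) n (mkA n d M M (\<lambda>a. G' a + s * R2 a)) x" for s
          proof
            fix i show "matvec N n A x i + s * matvec N n U x i = matvec (NN n d) n (mkA n d M M (\<lambda>a. G' a + s * R2 a)) x i"
            proof (cases "i \<le> n")
              case True then show ?thesis unfolding N_def A_def U_def using matvec_mkA_low[OF True] by (simp add: matvec_def)
            next
              case False then have ni: "n < i" by simp
              show ?thesis
              proof (cases "i \<le> NN n d")
                case True then show ?thesis unfolding N_def A_def U_def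
                  using matvec_mkA_high[OF ni True d1] by (simp add: algebra_simps)
              next
                case False then show ?thesis by (simp add: matvec_def N_def)
              qed
            qed
          qed
          have "(\<lambda>s. feval N d F (\<lambda>j. matvec N n A x j + s * matvec N n U x j)) = (\<lambda>s. feval n d G x + s * R x)"
          proof
            fix s
            have "feval N d F (\<lambda>j. matvec N n A x j + s * matvec N n U x j) = feval n d (\<lambda>a. G' a + s * R2 a) (matvec n n M x)"
              unfolding F_def vec[of s] unfolding N_def by (rule F_mkA_same[OF d1])
            also have "\<dots> = feval n d G' (matvec n n M x) + s * feval n d R2 (matvec n n M x)" by (rule feval_lin)
            also have "\<dots> = feval n d G x + s * R x"
              using G'e[of "matvec n n M x"] R2e[of "matvec n n M x"] PMx[OF x] R0e[of x] by simp
            finally show "feval N d F (\<lambda>j. matvec N n A x j + s * matvec N n U x j) = feval n d G x + s * R x" .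
          qed
          then show ?thesis by (simp add: dderiv_feval[symmetric] dderiv_def deriv_affine)
        qed
        have "dderiv (feval N d F) (matvec N n A x) (matvec N n Av x)
              = Dv N d F (matvec N n A x) (\<lambda>i. (- x k) * matvec N n A tw i + matvec N n U x i)"
          by (simp add: dderiv_feval Avx)
        also have "\<dots> = (- x k) * Dv N d F (matvec N n A x) (matvec N n A tw) + Dv N d F (matvec N n A x) (matvec N n U x)"
          by (rule Dv_lin)
        also have "\<dots> = (- x k) * Dv n d G x tw + R x" by (simp only: e1 e2)
        also have "\<dots> = feval n d Hv x" by (simp add: R_def)
        finally show ?thesis by simp
      qed
      show "case z of (tv, Hv) \<Rightarrow> \<exists>(Av, tv')\<in>cone_tangent_G N n A t. \<exists>a b. tv = (\<lambda>i. tv' i + a * t i) \<and>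
              (\<forall>x\<in>vecs n. feval n d Hv x = dderiv (feval N d F) (matvec N n A x) (matvec N n Av x) + b * feval n d G x)"
        unfolding zz using inG key by (intro case_prodI bexI[of _ "(Av, tw)"] exI[of _ 0]) auto
    qed
    show "\<exists>A. param_section N n d p F A q G \<and>
                   (\<exists>t H. t \<in> vecs n \<and> matvec N n A t = p \<and> H \<in> forms n d \<and>
                          (\<forall>x\<in>vecs n. feval n d H x = feval N d F (matvec N n A x)) \<and>
                          dphi_surj N n d F A t H)"
      using PS tv At Gf FA DS by (intro exI[of _ A] conjI exI[of _ t] exI[of _ G]) auto
  qed
qed


end
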